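(* Let $H_1,\dots,H_k$ be linear subspaces of $\mathbb{R}^n$ with $1\le\dim H_j\le n-2$ for $j=1,\dots,k$. The following statements are equivalent. (i) $H_1^\perp+\cdots+H_k^\perp=\mathbb{R}^n$, and $\{H_1^\perp,\dots,H_k^\perp\}$ cannot be partitioned into two nonempty subsets such that every subspace in one is orthogonal to every subspace in the other. (ii) If $E\subset S^{n-1}$ is nonempty and closed, and for each $j=1,\dots,k$ and each $x\in E$ we have $S^{n-1}\cap(H_j^\perp+x)\subset E$, then $E=S^{n-1}$. (iii) If $F\subset\mathbb{R}^n$ is closed and invariant under every rotation that fixes $H_j$, for each $j=1,\dots,k$, then $F$ is a union of spheres centered at the origin. (iv) If $K$ is a convex body in $\mathbb{R}^n$ that is rotationally symmetric with respect to $H_j$ for each $j=1,\dots,k$, then $K$ is a ball centered at the origin.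
   Context: $H^\perp$ is the orthogonal complement of $H$; $S^{n-1}$ is the unit sphere. A rotation fixing $H$ is an element of $SO(n)$ acting as the identity on $H$. A set $X$ is rotationally symmetric with respect to an $i$-dimensional subspace $H$ if for every $x\in H$, $X\cap(H^\perp+x)$ is a union of $(n-i-1)$-dimensional spheres each centered at $x$ (equivalently, $X$ is invariant under every element of $SO(n)$ fixing $H$ pointwise). A convex body is a compact convex set with nonempty interior. *)

theory Defs
  imports "HOL-Analysis.Analysis"
begin

definition rotation_fixing :: "(real^'n) set \<Rightarrow> (real^'n \<Rightarrow> real^'n) \<Rightarrow> bool" where
  "rotation_fixing H f \<longleftrightarrow>
     orthogonal_transformation f \<and> det (matrix f) = 1 \<and> (\<forall>x\<in>H. f x = x)"

definition orthogonal_subspaces :: "(real^'n) set \<Rightarrow> (real^'n) set \<Rightarrow> bool" where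
  "orthogonal_subspaces A B \<longleftrightarrow> (\<forall>u\<in>A. \<forall>v\<in>B. orthogonal u v)"

definition rot_symmetric :: "(real^'n) set \<Rightarrow> (real^'n) set \<Rightarrow> bool" where
  "rot_symmetric H X \<longleftrightarrow>
     (\<forall>x\<in>H. \<exists>R::real set.
        X \<inter> ((\<lambda>y. y + x) ` orthogonal_comp H) =
        (\<Union>r\<in>R. {y \<in> (\<lambda>y. y + x) ` orthogonal_comp H. dist y x = r}))"

definition convex_body :: "(real^'n) set \<Rightarrow> bool" where
  "convex_body K \<longleftrightarrow> compact K \<and> convex K \<and> interior K \<noteq> {}"

end

theory Submission
  imports Defs
begin

definition rfl :: "real^'n \<Rightarrow> real^'n \<Rightarrow> real^'n" where
  "rfl a x = x - (2 * (x \<bullet> a) / (a \<bullet> a)) *\<^sub>R a"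

lemma rfl_zero[simp]: "rfl 0 x = x"
  by (simp add: rfl_def)

lemma rfl_linear: "linear (rfl a)"
  unfolding rfl_def by (intro linearI) (auto simp: inner_add_left algebra_simps add_divide_distrib scaleR_add_left[symmetric] simp del: scaleR_add_left)

lemma rfl_inner: "rfl a x \<bullet> rfl a y = x \<bullet> y"
proof (cases "a = 0")
  case False
  then have "a \<bullet> a \<noteq> 0" by simp
  then show ?thesis unfolding rfl_def
    by (simp add: inner_diff_left inner_diff_right inner_commute field_simps)
qed simp

lemma rfl_orth: "orthogonal_transformation (rfl a)"
  unfolding orthogonal_transformation_def using rfl_linear rfl_inner by blast

lemma rfl_norm: "norm (rfl a x) = norm x"
  using rfl_orth orthogonal_transformation_norm by blast

lemma rfl_sym: "rfl a x \<bullet> y = x \<bullet> rfl a y"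
  unfolding rfl_def by (simp add: inner_diff_left inner_diff_right inner_commute)

lemma rfl_rfl: "rfl a (rfl a x) = x"
proof (cases "a = 0")
  case False
  then have "a \<bullet> a \<noteq> 0" by simp
  then show ?thesis unfolding rfl_def
    by (simp add: inner_diff_left algebra_simps field_simps)
qed simp

lemma rfl_scale: "rfl (t *\<^sub>R a) x = (if t = 0 then x else rfl a x)"
  unfolding rfl_def by (auto simp: field_simps power2_eq_square)

lemma rfl_orth0: "x \<bullet> a = 0 \<Longrightarrow> rfl a x = x"
  by (simp add: rfl_def)

lemma rfl_swap: assumes "norm z = norm w" shows "rfl (z - w) z = w"
proof (cases "z = w")
  case False
  have nz: "(z - w) \<bullet> (z - w) \<noteq> 0" using False by simp
  have zz: "z \<bullet> z = w \<bullet> w" using assms by (simp add: dot_square_norm)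
  have "2 * (z \<bullet> (z - w)) = (z - w) \<bullet> (z - w)"
    using zz by (simp add: inner_diff_left inner_diff_right inner_commute)
  then have "2 * (z \<bullet> (z - w)) / ((z - w) \<bullet> (z - w)) = 1" using nz by (metis divide_self)
  then have "rfl (z - w) z = z - 1 *\<^sub>R (z - w)" by (simp only: rfl_def)
  then show ?thesis by simp
qed (simp add: rfl_def)

lemma rfl_conj: "rfl (rfl a b) x = rfl a (rfl b (rfl a x))"
proof -
  interpret linear "rfl a" by (rule rfl_linear)
  have e1: "rfl a x \<bullet> b = x \<bullet> rfl a b" by (rule rfl_sym)
  have e2: "rfl a b \<bullet> rfl a b = b \<bullet> b" by (rule rfl_inner)
  have "rfl a (rfl b (rfl a x)) = rfl a (rfl a x - (2 * (rfl a x \<bullet> b) / (b \<bullet> b)) *\<^sub>R b)"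
    by (simp add: rfl_def[of b])
  also have "\<dots> = x - (2 * (x \<bullet> rfl a b) / (rfl a b \<bullet> rfl a b)) *\<^sub>R rfl a b"
    by (simp add: diff scale rfl_rfl e1 e2)
  finally show ?thesis by (simp add: rfl_def[of "rfl a b"])
qed

lemma rfl_commute_orth:
  assumes g: "orthogonal_transformation g"
  shows "rfl (g a) (g x) = g (rfl a x)"
proof -
  interpret linear g using g by (simp add: orthogonal_transformation)
  have "g x \<bullet> g a = x \<bullet> a" "g a \<bullet> g a = a \<bullet> a" using g by (auto simp: orthogonal_transformation_def)
  then show ?thesis by (simp add: rfl_def diff scale)
qed

lemma det_rfl_axis: "det (matrix (rfl (axis k (1::real)) :: real^'n \<Rightarrow> real^'n)) = -1"
proof -
  have ent: "matrix (rfl (axis k (1::real)) :: real^'n \<Rightarrow> real^'n) $ i $ j = (if i = j then (if i = k then -1 else 1) else 0)" for i j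
    by (auto simp: matrix_def rfl_def inner_axis_axis) (auto simp: axis_def)
  have "det (matrix (rfl (axis k (1::real)) :: real^'n \<Rightarrow> real^'n)) = prod (\<lambda>i. if i = k then -1 else 1) (UNIV::'n set)"
    by (subst det_diagonal) (auto simp: ent intro!: prod.cong)
  also have "\<dots> = -1" by (subst prod.delta) auto
  finally show ?thesis .
qed

lemma det_rfl:
  fixes a :: "real^'n"
  assumes "a \<noteq> 0" shows "det (matrix (rfl a)) = -1"
proof -
  obtain k :: 'n where True by simp
  have nrm: "norm (axis k (1::real)) = norm (a /\<^sub>R norm a)" using assms by simp
  obtain g :: "real^'n \<Rightarrow> real^'n" where g: "orthogonal_transformation g" "g (axis k 1) = a /\<^sub>R norm a"
    using orthogonal_transformation_exists[OF nrm] by blast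
  have lg: "linear g" using g by (simp add: orthogonal_transformation)
  have r: "rfl (a /\<^sub>R norm a) = rfl a" using assms by (auto simp: rfl_scale fun_eq_iff)
  have comm: "rfl a (g x) = g (rfl (axis k 1) x)" for x
    using rfl_commute_orth[OF g(1), of "axis k 1" x] by (simp add: g(2) r)
  have "rfl a \<circ> g = g \<circ> rfl (axis k 1)"
    by (simp add: fun_eq_iff comm)
  moreover have "matrix (rfl a \<circ> g) = matrix (rfl a) ** matrix g"
    by (rule matrix_compose[OF lg rfl_linear])
  moreover have "matrix (g \<circ> rfl (axis k 1)) = matrix g ** matrix (rfl (axis k 1))"
    by (rule matrix_compose[OF rfl_linear lg])
  ultimately have "matrix (rfl a) ** matrix g = matrix g ** matrix (rfl (axis k 1))"
    by simp
  then have "det (matrix (rfl a) ** matrix g) = det (matrix g ** matrix (rfl (axis k 1)))"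
    by simp
  then have "det (matrix (rfl a)) * det (matrix g) = det (matrix g) * det (matrix (rfl (axis k 1)))"
    by (simp only: det_mul)
  then have "(det (matrix (rfl a)) + 1) * det (matrix g) = 0"
    using det_rfl_axis[of k] by (simp add: algebra_simps)
  moreover have "det (matrix g) \<noteq> 0" using orthogonal_transformation_det[OF g(1)] by auto
  ultimately show ?thesis by simp
qed

lemma grow:
  fixes N W :: "(real^'n) set"
  assumes sc: "\<And>c t. c \<in> N \<Longrightarrow> t *\<^sub>R c \<in> N"
    and cl: "\<And>a b. a \<in> N \<Longrightarrow> b \<in> N \<Longrightarrow> rfl a b \<in> N"
    and W: "subspace W" "W \<subseteq> N"
    and eW: "\<And>q. \<exists>e\<in>W. e \<noteq> 0 \<and> e \<bullet> q = 0"
    and w: "w \<in> N" "a0 \<in> W" "w \<bullet> a0 \<noteq> 0"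
  shows "span (insert w W) \<subseteq> N"
proof -
  have spW: "span W = W" using W(1) by simp
  obtain p h where p: "p \<in> W" and h: "\<And>y. y \<in> W \<Longrightarrow> orthogonal h y" and wph: "w = p + h"
    using orthogonal_subspace_decomp_exists[of W w] spW by metis
  show ?thesis
  proof (cases "h = 0")
    case True
    then have "w \<in> span W" using wph p by (simp add: span_base)
    then show ?thesis using span_redundant[of w W] spW W by simp
  next
    case False
    define \<eta> where "\<eta> = norm h"
    have eta: "\<eta> > 0" using False by (simp add: \<eta>_def)
    define u where "u = h /\<^sub>R \<eta>"
    have uW: "u \<bullet> y = 0" if "y \<in> W" for y
      using h[OF that] by (simp add: u_def orthogonal_def)
    have uu: "u \<bullet> u = 1" using eta by (simp add: u_def \<eta>_def dot_square_norm power2_eq_square)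
    have hu: "h = \<eta> *\<^sub>R u" using eta by (simp add: u_def)
    have "w \<bullet> a0 = p \<bullet> a0" using h[OF w(2)] by (simp add: wph inner_add_left orthogonal_def)
    then have p0: "p \<noteq> 0" using w(3) by auto
    define T where "T = {\<sigma>. \<exists>q\<in>W. norm q = \<sigma> \<and> u + q \<in> N}"
    have nuq: "norm (u + q) ^ 2 = 1 + norm q ^ 2" if "q \<in> W" for q
      using uW[OF that] uu by (simp add: power2_norm_eq_inner inner_add_left inner_add_right inner_commute)
    have T1: "u + q' \<in> N" if as: "\<sigma> \<in> T" "q' \<in> W" "norm q' = \<sigma>" for \<sigma> q'
    proof -
      obtain q where q: "q \<in> W" "norm q = \<sigma>" "u + q \<in> N" using as(1) by (auto simp: T_def)
      have "norm (u + q) = norm (u + q')"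
        using nuq[OF q(1)] nuq[OF as(2)] q(2) as(3)
        by (metis norm_ge_zero power2_eq_imp_eq)
      then have "rfl ((u + q) - (u + q')) (u + q) = u + q'" by (rule rfl_swap)
      moreover have "(u + q) - (u + q') \<in> N"
        using W q(1) as(2) by (simp add: subspace_diff subsetD)
      ultimately show ?thesis using cl q(3) by metis
    qed
    have T2: "\<tau> \<in> T" if as: "\<sigma> \<in> T" "\<sigma> > 0" "\<tau> \<ge> \<bar>\<sigma>^2 - 1\<bar> / (2 * \<sigma>)" for \<sigma> \<tau>
    proof -
      obtain q where q: "q \<in> W" "norm q = \<sigma>" "u + q \<in> N" using as(1) by (auto simp: T_def)
      obtain e0 where e0: "e0 \<in> W" "e0 \<noteq> 0" "e0 \<bullet> q = 0" using eW by blast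
      define e where "e = e0 /\<^sub>R norm e0"
      have eW': "e \<in> W" using e0 W(1) by (simp add: e_def subspace_scale)
      have ee: "e \<bullet> e = 1" using e0 by (simp add: e_def dot_square_norm power2_eq_square)
      have eq: "e \<bullet> q = 0" using e0 by (simp add: e_def)
      have qq: "q \<bullet> q = \<sigma>^2" using q by (simp add: dot_square_norm)
      define \<beta> where "\<beta> = (\<sigma>^2 - 1) / (2 * \<sigma>^2)"
      have bs: "(\<beta> * \<sigma>)^2 = (\<bar>\<sigma>^2 - 1\<bar> / (2 * \<sigma>))^2"
        using as(2) by (simp add: \<beta>_def power2_eq_square field_simps)
      have tau0: "\<tau> \<ge> 0" using as(2,3) by (smt (verit) divide_nonneg_pos abs_ge_zero)
      have le: "(\<beta> * \<sigma>)^2 \<le> \<tau>^2" unfolding bs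
        using as(2) by (intro power_mono[OF as(3)]) (simp add: zero_le_divide_iff)
      define t where "t = sqrt (\<tau>^2 - (\<beta> * \<sigma>)^2)"
      have tt: "t^2 = \<tau>^2 - (\<beta> * \<sigma>)^2" using le by (simp add: t_def)
      define y where "y = \<beta> *\<^sub>R q + t *\<^sub>R e"
      have yW: "y \<in> W" using W(1) q(1) eW' by (simp add: y_def subspace_add subspace_scale)
      have "y \<bullet> y = (\<beta> * \<sigma>)^2 + t^2"
        by (simp add: y_def inner_add_left inner_add_right inner_commute eq ee qq power2_eq_square algebra_simps)
      then have "y \<bullet> y = \<tau>^2" using tt by simp
      then have ny: "norm y = \<tau>" using tau0 by (simp add: norm_eq_sqrt_inner)
      define v where "v = q - y"
      have vN: "v \<in> N" using W yW q(1) by (simp add: v_def subspace_diff subsetD)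
      have uy: "u \<bullet> y = 0" "u \<bullet> q = 0" using uW yW q(1) by auto
      have yq: "y \<bullet> q = \<beta> * \<sigma>^2"
        by (simp add: y_def inner_add_left eq qq)
      have bq: "\<beta> * \<sigma>^2 = (\<sigma>^2 - 1) / 2" using as(2) by (simp add: \<beta>_def field_simps)
      have "v \<bullet> (u + q) = (q \<bullet> u - y \<bullet> u) + (q \<bullet> q - y \<bullet> q)"
        by (simp add: v_def inner_diff_left inner_add_right)
      also have "\<dots> = \<sigma>^2 - \<beta> * \<sigma>^2" using uy yq qq by (simp add: inner_commute)
      also have "\<dots> = (\<sigma>^2 + 1) / 2" by (subst bq) (simp add: field_simps)
      finally have "v \<bullet> (u + q) = (\<sigma>^2 + 1) / 2" .
      moreover have "(u + q) \<bullet> (u + q) = 1 + \<sigma>^2"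
        using uy uu qq by (simp add: inner_add_left inner_add_right inner_commute)
      moreover have "1 + \<sigma>^2 \<noteq> 0" using zero_le_power2[of \<sigma>] by linarith
      ultimately have "2 * (v \<bullet> (u + q)) / ((u + q) \<bullet> (u + q)) = 1"
        by simp
      then have "rfl (u + q) v = v - (u + q)" by (simp only: rfl_def scaleR_one)
      then have "rfl (u + q) v = - (u + y)" by (simp add: v_def)
      then have "u + y = (-1) *\<^sub>R rfl (u + q) v" by simp
      then have "u + y \<in> N" using sc cl q(3) vN by metis
      then show ?thesis using yW ny by (auto simp: T_def)
    qed
    define g where "g = (\<lambda>\<sigma>::real. \<bar>\<sigma>^2 - 1\<bar> / (2 * \<sigma>))"
    have T4: "max (g \<sigma>) 1 \<in> T" if "\<sigma> \<in> T" "\<sigma> > 0" for \<sigma>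
      using T2[OF that] by (simp add: g_def)
    have ind: "\<forall>\<sigma>. \<sigma> \<in> T \<longrightarrow> 1 \<le> \<sigma> \<longrightarrow> \<sigma> \<le> 2^m \<longrightarrow> 1 \<in> T" for m :: nat
    proof (induction m)
      case 0
      then show ?case by (metis order_antisym power_0)
    next
      case (Suc m)
      show ?case
      proof (intro allI impI)
        fix \<sigma> :: real assume s: "\<sigma> \<in> T" "1 \<le> \<sigma>" "\<sigma> \<le> 2 ^ Suc m"
        have "1 \<le> \<sigma>^2" using s(2) by (simp add: one_le_power)
        then have "g \<sigma> = (\<sigma>^2 - 1) / (2 * \<sigma>)" by (simp add: g_def)
        also have "\<dots> \<le> \<sigma>^2 / (2 * \<sigma>)" using s(2) by (intro divide_right_mono) auto
        also have "\<dots> = \<sigma> / 2" using s(2) by (simp add: power2_eq_square)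
        finally have "g \<sigma> \<le> \<sigma> / 2" .
        also have "\<dots> \<le> 2^m" using s(3) by simp
        finally have "max (g \<sigma>) 1 \<le> 2^m" by simp
        moreover have "max (g \<sigma>) 1 \<in> T" using T4 s by simp
        ultimately show "1 \<in> T" using Suc.IH by auto
      qed
    qed
    have pT: "norm p / \<eta> \<in> T"
    proof -
      have "u + p /\<^sub>R \<eta> = inverse \<eta> *\<^sub>R w" using eta by (simp add: wph hu algebra_simps)
      then have "u + p /\<^sub>R \<eta> \<in> N" using sc w(1) by metis
      moreover have "p /\<^sub>R \<eta> \<in> W" using W(1) p by (simp add: subspace_scale)
      moreover have "norm (p /\<^sub>R \<eta>) = norm p / \<eta>" using eta by (simp add: divide_inverse_commute)
      ultimately show ?thesis unfolding T_def by blast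
    qed
    have pos: "norm p / \<eta> > 0" using p0 eta by simp
    define s1 where "s1 = max (g (norm p / \<eta>)) 1"
    have s1T: "s1 \<in> T" using T4[OF pT pos] by (simp add: s1_def)
    obtain m :: nat where "s1 < 2^m" using real_arch_pow[of 2 s1] by auto
    then have oneT: "1 \<in> T" using ind[of m] s1T by (simp add: s1_def)
    have T6: "\<tau> \<in> T" if "\<tau> \<ge> 0" for \<tau>
      using T2[OF oneT] that by simp
    show ?thesis
    proof
      fix x assume "x \<in> span (insert w W)"
      then obtain k where "x - k *\<^sub>R w \<in> span W" by (auto simp: span_insert)
      then have b: "x - k *\<^sub>R w \<in> W" using spW by simp
      show "x \<in> N"
      proof (cases "k = 0")
        case True
        then show ?thesis using b W by auto
      next
        case False
        define b where "b = x - k *\<^sub>R w"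
        define q where "q = (1 / (k * \<eta>)) *\<^sub>R (k *\<^sub>R p + b)"
        have qW: "q \<in> W" using W(1) p b by (simp add: q_def b_def subspace_add subspace_scale)
        have "u + q \<in> N" using T1[OF T6[of "norm q"] qW] by simp
        moreover have "x = (k * \<eta>) *\<^sub>R (u + q)"
          using False eta by (simp add: q_def b_def wph hu algebra_simps)
        ultimately show ?thesis using sc by metis
      qed
    qed
  qed
qed

lemma core:
  fixes N :: "(real^'n) set" and V :: "nat \<Rightarrow> (real^'n) set"
  assumes sc: "\<And>c t. c \<in> N \<Longrightarrow> t *\<^sub>R c \<in> N"
    and cl: "\<And>a b. a \<in> N \<Longrightarrow> b \<in> N \<Longrightarrow> rfl a b \<in> N"
    and Vsub: "\<And>j. j \<in> {1..k} \<Longrightarrow> subspace (V j)"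
    and VN: "\<And>j. j \<in> {1..k} \<Longrightarrow> V j \<subseteq> N"
    and eV: "\<And>j q. j \<in> {1..k} \<Longrightarrow> \<exists>e\<in>V j. e \<noteq> 0 \<and> e \<bullet> q = 0"
    and P1: "span (\<Union>j\<in>{1..k}. V j) = UNIV \<and>
              \<not> (\<exists>I J. I \<union> J = {1..k} \<and> I \<inter> J = {} \<and> I \<noteq> {} \<and> J \<noteq> {} \<and>
                    (\<forall>i\<in>I. \<forall>j\<in>J. orthogonal_subspaces (V i) (V j)))"
  shows "N = UNIV"
proof -
  have k1: "1 \<in> {1..k}"
  proof (rule ccontr)
    assume "1 \<notin> {1..k}"
    then have "{1..k} = {}" by auto
    then have "(UNIV :: (real^'n) set) = {0}" using P1 by simp
    moreover obtain i :: 'n where True by simp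
    moreover have "axis i (1::real) \<noteq> 0" by (simp add: axis_eq_0_iff)
    ultimately show False by (metis UNIV_I singletonD)
  qed
  define P where "P = (\<lambda>W. subspace W \<and> V 1 \<subseteq> W \<and> W \<subseteq> N)"
  have P1': "P (V 1)" using Vsub[OF k1] VN[OF k1] by (simp add: P_def)
  have "\<forall>W. P W \<longrightarrow> dim W < DIM(real^'n) + 1"
    using dim_subset_UNIV by (metis less_Suc_eq_le Suc_eq_plus1)
  then obtain W where PW: "P W" and maxW: "\<And>W'. P W' \<Longrightarrow> dim W' \<le> dim W"
    using ex_has_greatest_nat[of P "V 1" dim, OF P1'] by blast
  have W: "subspace W" "V 1 \<subseteq> W" "W \<subseteq> N" using PW by (auto simp: P_def)
  have eW: "\<exists>e\<in>W. e \<noteq> 0 \<and> e \<bullet> q = 0" for q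
    using eV[OF k1, of q] W(2) by blast
  have grow': "w \<in> W" if "w \<in> N" "a \<in> W" "w \<bullet> a \<noteq> 0" for w a
  proof (rule ccontr)
    assume nw: "w \<notin> W"
    have sub: "span (insert w W) \<subseteq> N" by (rule grow[OF sc cl W(1) W(3) eW that])
    have "P (span (insert w W))"
      using sub W(2) span_superset[of "insert w W"] by (auto simp: P_def)
    then have "dim (span (insert w W)) \<le> dim W" by (rule maxW)
    moreover have "dim (span (insert w W)) = dim W + 1"
    proof -
      have "span W = W" using W(1) by simp
      then have "w \<notin> span W" using nw by metis
      then show ?thesis by (simp add: dim_insert)
    qed
    ultimately show False by simp
  qed
  have dich: "V j \<subseteq> W \<or> (\<forall>v\<in>V j. \<forall>a\<in>W. v \<bullet> a = 0)" if j: "j \<in> {1..k}" for j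
  proof (rule disjCI)
    assume "\<not> (\<forall>v\<in>V j. \<forall>a\<in>W. v \<bullet> a = 0)"
    then obtain v0 a where v0: "v0 \<in> V j" "a \<in> W" "v0 \<bullet> a \<noteq> 0" by blast
    have v0W: "v0 \<in> W" using grow'[OF _ v0(2,3)] v0(1) VN[OF j] by blast
    show "V j \<subseteq> W"
    proof
      fix v assume v: "v \<in> V j"
      show "v \<in> W"
      proof (cases "v \<bullet> a = 0")
        case False
        then show ?thesis using grow'[OF _ v0(2)] v VN[OF j] by blast
      next
        case True
        have "v + v0 \<in> V j" using v v0(1) Vsub[OF j] by (simp add: subspace_add)
        moreover have "(v + v0) \<bullet> a \<noteq> 0" using True v0(3) by (simp add: inner_add_left)
        ultimately have "v + v0 \<in> W" using grow'[OF _ v0(2)] VN[OF j] by blast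
        then have "(v + v0) - v0 \<in> W" using v0W W(1) subspace_diff by blast
        then show ?thesis by simp
      qed
    qed
  qed
  define I where "I = {j\<in>{1..k}. V j \<subseteq> W}"
  define J where "J = {j\<in>{1..k}. \<not> V j \<subseteq> W}"
  have "I \<union> J = {1..k}" "I \<inter> J = {}" by (auto simp: I_def J_def)
  moreover have "I \<noteq> {}" using k1 W(2) by (auto simp: I_def)
  moreover have "\<forall>i\<in>I. \<forall>j\<in>J. orthogonal_subspaces (V i) (V j)"
  proof (intro ballI)
    fix i j assume i: "i \<in> I" and j: "j \<in> J"
    have "\<forall>v\<in>V j. \<forall>a\<in>W. v \<bullet> a = 0" using dich[of j] j by (auto simp: J_def)
    moreover have "V i \<subseteq> W" using i by (auto simp: I_def)
    ultimately show "orthogonal_subspaces (V i) (V j)"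
      unfolding orthogonal_subspaces_def orthogonal_def by (metis inner_commute subsetD)
  qed
  ultimately have "J = {}" using P1 by blast
  then have "\<forall>j\<in>{1..k}. V j \<subseteq> W" by (auto simp: J_def)
  then have "(\<Union>j\<in>{1..k}. V j) \<subseteq> W" by blast
  then have "span (\<Union>j\<in>{1..k}. V j) \<subseteq> W" using W(1) by (simp add: span_minimal)
  then have "W = UNIV" using P1 by auto
  then show ?thesis using W(3) by auto
qed

lemma eV_lemma:
  fixes H :: "(real^'n) set"
  assumes "subspace H" "1 \<le> dim H" "dim H \<le> CARD('n) - 2"
  shows "\<exists>e\<in>orthogonal_comp H. e \<noteq> 0 \<and> e \<bullet> q = 0"
proof -
  have "dim (insert q H) \<le> dim H + 1" by (simp add: dim_insert)
  then have "dim (insert q H) < DIM(real^'n)" using assms(2,3) by simp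
  then obtain x where x: "x \<noteq> 0" "\<And>y. y \<in> span (insert q H) \<Longrightarrow> orthogonal x y"
    using orthogonal_to_subspace_exists by blast
  have "x \<in> orthogonal_comp H"
    using x(2) span_superset[of "insert q H"] by (auto simp: orthogonal_comp_def orthogonal_commute)
  moreover have "x \<bullet> q = 0" using x(2)[of q] span_superset[of "insert q H"] by (auto simp: orthogonal_def)
  ultimately show ?thesis using x(1) by blast
qed

lemma p1p2:
  fixes V :: "nat \<Rightarrow> (real^'n) set" and E :: "(real^'n) set"
  assumes Vsub: "\<And>j. j \<in> {1..k} \<Longrightarrow> subspace (V j)"
    and eV: "\<And>j q. j \<in> {1..k} \<Longrightarrow> \<exists>e\<in>V j. e \<noteq> 0 \<and> e \<bullet> q = 0"
    and P1: "span (\<Union>j\<in>{1..k}. V j) = UNIV \<and>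
              \<not> (\<exists>I J. I \<union> J = {1..k} \<and> I \<inter> J = {} \<and> I \<noteq> {} \<and> J \<noteq> {} \<and>
                    (\<forall>i\<in>I. \<forall>j\<in>J. orthogonal_subspaces (V i) (V j)))"
    and E: "E \<subseteq> sphere 0 1" "E \<noteq> {}"
    and inv: "\<forall>j\<in>{1..k}. \<forall>x\<in>E. sphere 0 1 \<inter> ((\<lambda>y. y + x) ` V j) \<subseteq> E"
  shows "E = sphere 0 1"
proof -
  define N where "N = {c. \<forall>x\<in>E. rfl c x \<in> E}"
  have sc: "t *\<^sub>R c \<in> N" if "c \<in> N" for c t using that by (auto simp: N_def rfl_scale)
  have cl: "rfl a b \<in> N" if "a \<in> N" "b \<in> N" for a b using that by (auto simp: N_def rfl_conj)
  have VN: "V j \<subseteq> N" if j: "j \<in> {1..k}" for j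
  proof
    fix a assume a: "a \<in> V j"
    show "a \<in> N" unfolding N_def mem_Collect_eq
    proof (intro ballI)
      fix x assume x: "x \<in> E"
      have "rfl a x \<in> sphere 0 1" using x E(1) by (auto simp: rfl_norm)
      moreover have "rfl a x = (- (2 * (x \<bullet> a) / (a \<bullet> a))) *\<^sub>R a + x" by (simp add: rfl_def)
      moreover have "(- (2 * (x \<bullet> a) / (a \<bullet> a))) *\<^sub>R a \<in> V j" using a Vsub[OF j] subspace_scale by blast
      ultimately have "rfl a x \<in> sphere 0 1 \<inter> ((\<lambda>y. y + x) ` V j)" by blast
      then show "rfl a x \<in> E" using inv j x by blast
    qed
  qed
  have "N = UNIV" by (rule core[OF sc cl Vsub VN eV P1])
  show ?thesis
  proof
    show "sphere 0 1 \<subseteq> E"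
    proof
      fix y :: "real^'n" assume y: "y \<in> sphere 0 1"
      obtain x0 where x0: "x0 \<in> E" using E(2) by blast
      have "norm x0 = norm y" using x0 y E(1) by auto
      then have "rfl (x0 - y) x0 = y" by (rule rfl_swap)
      moreover have "x0 - y \<in> N" using \<open>N = UNIV\<close> by simp
      ultimately show "y \<in> E" using x0 by (auto simp: N_def)
    qed
  qed (rule E(1))
qed

lemma rfl_comp_orth: "orthogonal_transformation (rfl b \<circ> rfl a)"
  unfolding orthogonal_transformation
  using linear_compose[OF rfl_linear rfl_linear] by (simp add: rfl_norm)

lemma rot_exists:
  fixes H :: "(real^'n) set"
  assumes eV: "\<And>q. \<exists>e\<in>orthogonal_comp H. e \<noteq> 0 \<and> e \<bullet> q = 0"
    and y: "y \<in> orthogonal_comp H" and nz: "norm z = norm (y + z)"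
  shows "\<exists>f. rotation_fixing H f \<and> f z = y + z"
proof (cases "y = 0")
  case True
  have "rotation_fixing H id"
    by (simp add: rotation_fixing_def orthogonal_transformation linear_id matrix_id_mat_1)
  then show ?thesis using True by auto
next
  case False
  define w where "w = y + z"
  obtain b where b: "b \<in> orthogonal_comp H" "b \<noteq> 0" "b \<bullet> w = 0" using eV by blast
  define a where "a = z - w"
  have a0: "a \<noteq> 0" using False by (simp add: a_def w_def)
  have aV: "a \<in> orthogonal_comp H" using y subspace_orthogonal_comp[of H]
    by (simp add: a_def w_def subspace_neg)
  define f where "f = rfl b \<circ> rfl a"
  have "matrix f = matrix (rfl b) ** matrix (rfl a)"
    unfolding f_def by (rule matrix_compose[OF rfl_linear rfl_linear])
  then have "det (matrix f) = 1" using det_rfl[OF a0] det_rfl[OF b(2)] by (simp add: det_mul)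
  moreover have "f x = x" if "x \<in> H" for x
  proof -
    have "x \<bullet> a = 0" "x \<bullet> b = 0" using aV b(1) that by (auto simp: orthogonal_comp_def orthogonal_def)
    then show ?thesis by (simp add: f_def rfl_orth0)
  qed
  moreover have "f z = w"
  proof -
    have "rfl a z = w" unfolding a_def by (rule rfl_swap) (simp add: nz w_def)
    moreover have "w \<bullet> b = 0" using b(3) by (simp add: inner_commute)
    ultimately show ?thesis by (simp add: f_def rfl_orth0)
  qed
  ultimately show ?thesis using rfl_comp_orth[of b a]
    by (auto simp: rotation_fixing_def f_def w_def)
qed

lemma p2p3:
  fixes H :: "nat \<Rightarrow> (real^'n) set" and F :: "(real^'n) set"
  assumes eV: "\<And>j q. j \<in> {1..k} \<Longrightarrow> \<exists>e\<in>orthogonal_comp (H j). e \<noteq> 0 \<and> e \<bullet> q = 0"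
    and P2: "\<forall>E. E \<subseteq> sphere 0 1 \<and> E \<noteq> {} \<and> closed E \<and>
              (\<forall>j\<in>{1..k}. \<forall>x\<in>E. sphere 0 1 \<inter> ((\<lambda>y. y + x) ` orthogonal_comp (H j)) \<subseteq> E)
              \<longrightarrow> E = sphere 0 1"
    and F: "closed F" "\<forall>j\<in>{1..k}. \<forall>f. rotation_fixing (H j) f \<longrightarrow> f ` F = F"
  shows "\<exists>R::real set. F = (\<Union>r\<in>R. sphere 0 r)"
proof -
  have key: "y \<in> F" if x: "x \<in> F" and ny: "norm y = norm x" for x y
  proof (cases "x = 0")
    case True then show ?thesis using x ny by simp
  next
    case False
    define \<rho> where "\<rho> = norm x"
    have rho: "\<rho> > 0" using False by (simp add: \<rho>_def)
    define E where "E = {z \<in> sphere 0 1. \<rho> *\<^sub>R z \<in> F}"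
    have "E = sphere 0 1 \<inter> (\<lambda>z. inverse \<rho> *\<^sub>R z) ` F"
    proof (intro set_eqI iffI)
      fix z assume "z \<in> E"
      then have "z \<in> sphere 0 1" "\<rho> *\<^sub>R z \<in> F" by (auto simp: E_def)
      moreover have "z = inverse \<rho> *\<^sub>R (\<rho> *\<^sub>R z)" using rho by simp
      ultimately show "z \<in> sphere 0 1 \<inter> (\<lambda>z. inverse \<rho> *\<^sub>R z) ` F" by blast
    next
      fix z assume "z \<in> sphere 0 1 \<inter> (\<lambda>z. inverse \<rho> *\<^sub>R z) ` F"
      then obtain x' where "x' \<in> F" "z = inverse \<rho> *\<^sub>R x'" "z \<in> sphere 0 1" by blast
      then show "z \<in> E" using rho by (simp add: E_def)
    qed
    then have cE: "closed E" using F(1) by (simp add: closed_Int closed_scaling)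
    have xE: "inverse \<rho> *\<^sub>R x \<in> E" using rho x by (simp add: E_def \<rho>_def)
    have invE: "\<forall>j\<in>{1..k}. \<forall>z\<in>E. sphere 0 1 \<inter> ((\<lambda>y. y + z) ` orthogonal_comp (H j)) \<subseteq> E"
    proof (intro ballI subsetI)
      fix j z w assume j: "j \<in> {1..k}" and z: "z \<in> E" and w: "w \<in> sphere 0 1 \<inter> ((\<lambda>y. y + z) ` orthogonal_comp (H j))"
      obtain y where y: "y \<in> orthogonal_comp (H j)" "w = y + z" using w by blast
      have "norm z = norm (y + z)" using z w y(2) by (simp add: E_def)
      then obtain f where f: "rotation_fixing (H j) f" "f z = y + z"
        using rot_exists[OF eV[OF j] y(1)] by blast
      have lf: "linear f" using f(1) by (simp add: rotation_fixing_def orthogonal_transformation)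
      have "f (\<rho> *\<^sub>R z) = \<rho> *\<^sub>R w" using f(2) y(2) linear_cmul[OF lf] by simp
      moreover have "\<rho> *\<^sub>R z \<in> F" using z by (simp add: E_def)
      ultimately have "\<rho> *\<^sub>R w \<in> f ` F" by (metis imageI)
      then have "\<rho> *\<^sub>R w \<in> F" using F(2) j f(1) by blast
      then show "w \<in> E" using w by (simp add: E_def)
    qed
    have "E \<subseteq> sphere 0 1" by (auto simp: E_def)
    then have "E = sphere 0 1" using P2 cE xE invE by blast
    moreover have "inverse \<rho> *\<^sub>R y \<in> sphere 0 1" using rho ny by (simp add: \<rho>_def)
    ultimately have "inverse \<rho> *\<^sub>R y \<in> E" by simp
    then have "\<rho> *\<^sub>R (inverse \<rho> *\<^sub>R y) \<in> F" unfolding E_def by blast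
    then show ?thesis using rho by simp
  qed
  have "F = (\<Union>r\<in>norm ` F. sphere 0 r)"
  proof (intro set_eqI iffI)
    fix x :: "real^'n" assume "x \<in> F" then show "x \<in> (\<Union>r\<in>norm ` F. sphere 0 r)" by auto
  next
    fix y :: "real^'n" assume "y \<in> (\<Union>r\<in>norm ` F. sphere 0 r)"
    then obtain x where "x \<in> F" "norm y = norm x" by auto
    then show "y \<in> F" using key by blast
  qed
  then show ?thesis by blast
qed

lemma rs_invariant:
  fixes H K :: "(real^'n) set"
  assumes H: "subspace H" and rs: "rot_symmetric H K"
    and f: "orthogonal_transformation f" "\<And>x. x \<in> H \<Longrightarrow> f x = x"
  shows "f ` K \<subseteq> K"
proof
  fix fy assume "fy \<in> f ` K"
  then obtain y where y: "y \<in> K" "fy = f y" by blast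
  obtain x v where x: "x \<in> span H" and v: "\<And>w. w \<in> span H \<Longrightarrow> orthogonal v w" and yxv: "y = x + v"
    using orthogonal_subspace_decomp_exists[of H y] by metis
  have xH: "x \<in> H" using x H by (metis span_eq_iff)
  have vV: "v \<in> orthogonal_comp H"
    using v span_superset[of H] by (auto simp: orthogonal_comp_def orthogonal_commute)
  obtain R where R: "K \<inter> ((\<lambda>y. y + x) ` orthogonal_comp H) =
        (\<Union>r\<in>R. {y \<in> (\<lambda>y. y + x) ` orthogonal_comp H. dist y x = r})"
    using rs xH by (auto simp: rot_symmetric_def)
  have "y \<in> K \<inter> ((\<lambda>y. y + x) ` orthogonal_comp H)" using y(1) vV yxv by (auto simp: add.commute)
  then obtain r where r: "r \<in> R" "dist y x = r" using R by blast
  have lf: "linear f" using f(1) by (simp add: orthogonal_transformation)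
  have fy: "f y = f v + x" using yxv f(2)[OF xH] linear_add[OF lf] by simp
  have fvV: "f v \<in> orthogonal_comp H"
  proof -
    have "orthogonal w (f v)" if "w \<in> H" for w
    proof -
      have "w \<bullet> f v = f w \<bullet> f v" using f(2)[OF that] by simp
      also have "\<dots> = w \<bullet> v" using f(1) by (simp add: orthogonal_transformation_def)
      also have "\<dots> = 0" using vV that by (simp add: orthogonal_comp_def orthogonal_def)
      finally show ?thesis by (simp add: orthogonal_def)
    qed
    then show ?thesis by (simp add: orthogonal_comp_def)
  qed
  have "dist (f y) x = r"
    using r(2) fy yxv orthogonal_transformation_norm[OF f(1)] by (simp add: dist_norm)
  then have "f y \<in> (\<Union>r\<in>R. {y \<in> (\<lambda>y. y + x) ` orthogonal_comp H. dist y x = r})"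
    using fy fvV r(1) by blast
  then show "fy \<in> K" using R y(2) by blast
qed

lemma ball_lemma:
  fixes K :: "(real^'n) set"
  assumes K: "convex_body K" and R: "K = (\<Union>r\<in>R. sphere 0 r)"
  shows "\<exists>r>0. K = cball 0 r"
proof -
  have cK: "compact K" "convex K" "interior K \<noteq> {}" using K by (auto simp: convex_body_def)
  have ne: "K \<noteq> {}" using cK(3) interior_subset by blast
  obtain x0 where x0: "x0 \<in> K" "\<And>y. y \<in> K \<Longrightarrow> norm y \<le> norm x0"
    using continuous_attains_sup[OF cK(1) ne, of norm] continuous_on_norm_id by blast
  define r where "r = norm x0"
  have sph: "sphere 0 r \<subseteq> K"
  proof -
    obtain r' where "r' \<in> R" "x0 \<in> sphere 0 r'" using x0(1) R by blast
    then have "r' = r" by (simp add: r_def)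
    then show ?thesis using \<open>r' \<in> R\<close> R by blast
  qed
  have rpos: "r > 0"
  proof (rule ccontr)
    assume "\<not> r > 0"
    then have "K \<subseteq> {0}" using x0(2) by (force simp: r_def)
    then have "interior K \<subseteq> interior {0}" by (rule interior_mono)
    then show False using cK(3) by simp
  qed
  have "cball 0 r \<subseteq> K"
  proof
    fix x :: "real^'n" assume x: "x \<in> cball 0 r"
    obtain d :: "real^'n" where d: "norm d = 1" "x = norm x *\<^sub>R d"
    proof (cases "x = 0")
      case True
      obtain i :: 'n where True by simp
      show ?thesis by (rule that[of "axis i 1"]) (simp_all add: True)
    next
      case False
      show ?thesis by (rule that[of "x /\<^sub>R norm x"]) (simp_all add: False)
    qed
    define l where "l = (1 + norm x / r) / 2"
    have l: "0 \<le> l" "0 \<le> 1 - l" using x rpos by (auto simp: l_def field_simps)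
    have p: "r *\<^sub>R d \<in> K" "(- r) *\<^sub>R d \<in> K" using sph d(1) rpos by auto
    have "l *\<^sub>R (r *\<^sub>R d) + (1 - l) *\<^sub>R ((- r) *\<^sub>R d) = (l * r + (1 - l) * (- r)) *\<^sub>R d"
      by (simp only: scaleR_scaleR scaleR_add_left)
    also have "l * r + (1 - l) * (- r) = norm x" using rpos by (simp add: l_def field_simps)
    finally have "x = l *\<^sub>R (r *\<^sub>R d) + (1 - l) *\<^sub>R ((- r) *\<^sub>R d)" using d(2) by simp
    then show "x \<in> K" using convexD[OF cK(2) p l] by simp
  qed
  moreover have "K \<subseteq> cball 0 r" using x0(2) by (auto simp: r_def)
  ultimately show ?thesis using rpos by blast
qed

lemma p3p4:
  fixes H :: "nat \<Rightarrow> (real^'n) set" and K :: "(real^'n) set"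
  assumes Hsub: "\<And>j. j \<in> {1..k} \<Longrightarrow> subspace (H j)"
    and P3: "\<forall>F. closed F \<and> (\<forall>j\<in>{1..k}. \<forall>f. rotation_fixing (H j) f \<longrightarrow> f ` F = F)
              \<longrightarrow> (\<exists>R::real set. F = (\<Union>r\<in>R. sphere 0 r))"
    and K: "convex_body K" "\<forall>j\<in>{1..k}. rot_symmetric (H j) K"
  shows "\<exists>r>0. K = cball 0 r"
proof -
  have "closed K" using K(1) by (simp add: convex_body_def compact_imp_closed)
  moreover have "\<forall>j\<in>{1..k}. \<forall>f. rotation_fixing (H j) f \<longrightarrow> f ` K = K"
  proof (intro ballI allI impI)
    fix j f assume j: "j \<in> {1..k}" and f: "rotation_fixing (H j) f"
    have of: "orthogonal_transformation f" and fx: "\<And>x. x \<in> H j \<Longrightarrow> f x = x"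
      using f by (auto simp: rotation_fixing_def)
    have rsj: "rot_symmetric (H j) K" using K(2) j by blast
    have "f ` K \<subseteq> K" by (rule rs_invariant[OF Hsub[OF j] rsj of fx])
    moreover have "inv f ` K \<subseteq> K"
    proof (rule rs_invariant[OF Hsub[OF j]])
      show "rot_symmetric (H j) K" by (rule rsj)
      show "orthogonal_transformation (inv f)" using of by (rule orthogonal_transformation_inv)
      fix x assume "x \<in> H j"
      then have "f x = x" by (rule fx)
      then have "inv f (f x) = inv f x" by simp
      moreover have "inv f (f x) = x" using orthogonal_transformation_inj[OF of] by (rule inv_f_f)
      ultimately show "inv f x = x" by simp
    qed
    moreover have "f (inv f y) = y" for y using orthogonal_transformation_surj[OF of] by (simp add: surj_f_inv_f)
    moreover have "K \<subseteq> f ` K"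
    proof
      fix y assume "y \<in> K"
      then have "inv f y \<in> K" using \<open>inv f ` K \<subseteq> K\<close> by blast
      then show "y \<in> f ` K" using \<open>f (inv f y) = y\<close> by (metis imageI)
    qed
    ultimately show "f ` K = K" by blast
  qed
  ultimately have pre: "closed K \<and> (\<forall>j\<in>{1..k}. \<forall>f. rotation_fixing (H j) f \<longrightarrow> f ` K = K)" by blast
  from spec[OF P3, of K] pre have "\<exists>R::real set. K = (\<Union>r\<in>R. sphere 0 r)" by (rule mp)
  then obtain R where "K = (\<Union>r\<in>R. sphere 0 r)" by blast
  then show ?thesis by (rule ball_lemma[OF K(1)])
qed

lemma RSI:
  fixes H K :: "(real^'n) set"
  assumes hyp: "\<And>x v v'. x \<in> H \<Longrightarrow> v \<in> orthogonal_comp H \<Longrightarrow> v' \<in> orthogonal_comp H \<Longrightarrow>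
                 norm v = norm v' \<Longrightarrow> v + x \<in> K \<Longrightarrow> v' + x \<in> K"
  shows "rot_symmetric H K"
  unfolding rot_symmetric_def
proof (intro ballI)
  fix x assume x: "x \<in> H"
  define S where "S = (\<lambda>y. y + x) ` orthogonal_comp H"
  define R where "R = {dist y x | y. y \<in> K \<inter> S}"
  have "K \<inter> S = (\<Union>r\<in>R. {y \<in> S. dist y x = r})"
  proof (intro set_eqI iffI)
    fix y assume y: "y \<in> K \<inter> S"
    then have "dist y x \<in> R" by (auto simp: R_def)
    then show "y \<in> (\<Union>r\<in>R. {y \<in> S. dist y x = r})" using y by blast
  next
    fix y assume "y \<in> (\<Union>r\<in>R. {y \<in> S. dist y x = r})"
    then obtain y' where y': "y' \<in> K" "y' \<in> S" and y: "y \<in> S" "dist y x = dist y' x"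
      by (auto simp: R_def)
    obtain v where v: "v \<in> orthogonal_comp H" "y = v + x" using y(1) by (auto simp: S_def)
    obtain v' where v': "v' \<in> orthogonal_comp H" "y' = v' + x" using y'(2) by (auto simp: S_def)
    have "norm v' = norm v" using y(2) v(2) v'(2) by (simp add: dist_norm)
    then have "v + x \<in> K" using hyp[OF x v'(1) v(1)] y'(1) v'(2) by simp
    then show "y \<in> K \<inter> S" using v y(1) by simp
  qed
  then show "\<exists>R. K \<inter> ((\<lambda>y. y + x) ` orthogonal_comp H) =
        (\<Union>r\<in>R. {y \<in> (\<lambda>y. y + x) ` orthogonal_comp H. dist y x = r})"
    unfolding S_def by blast
qed

lemma pyth_eq:
  fixes d v v' :: "real^'n"
  assumes "d \<bullet> v = 0" "d \<bullet> v' = 0" "norm v = norm v'"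
  shows "norm (d + v) = norm (d + v')"
proof -
  have "(norm (d + v))^2 = (norm d)^2 + (norm v)^2"
    using assms(1) by (simp add: norm_add_Pythagorean orthogonal_def)
  moreover have "(norm (d + v'))^2 = (norm d)^2 + (norm v')^2"
    using assms(2) by (simp add: norm_add_Pythagorean orthogonal_def)
  ultimately show ?thesis using assms(3) by (metis norm_ge_zero power2_eq_imp_eq)
qed

lemma orth_comp_inner: "v \<in> orthogonal_comp H \<Longrightarrow> x \<in> H \<Longrightarrow> x \<bullet> v = 0"
  by (auto simp: orthogonal_comp_def orthogonal_def)

lemma caseA:
  fixes H :: "nat \<Rightarrow> (real^'n) set"
  assumes Hsub: "\<And>j. j \<in> {1..k} \<Longrightarrow> subspace (H j)"
    and ns: "span (\<Union>j\<in>{1..k}. orthogonal_comp (H j)) \<noteq> UNIV"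
  shows "\<exists>K. convex_body K \<and> (\<forall>j\<in>{1..k}. rot_symmetric (H j) K) \<and> \<not> (\<exists>r>0. K = cball 0 r)"
proof -
  define S where "S = (\<Union>j\<in>{1..k}. orthogonal_comp (H j))"
  have "dim S < DIM(real^'n)"
    using ns dim_eq_full[of S] dim_subset_UNIV[of S] unfolding S_def by linarith
  then obtain u0 where u0: "u0 \<noteq> 0" "\<And>y. y \<in> span S \<Longrightarrow> orthogonal u0 y"
    using orthogonal_to_subspace_exists by blast
  define u where "u = u0 /\<^sub>R norm u0"
  have nu: "norm u = 1" using u0(1) by (simp add: u_def)
  have uu: "u \<bullet> u = 1" using nu by (simp add: dot_square_norm)
  have uH: "u \<in> H j" if j: "j \<in> {1..k}" for j
  proof -
    have "orthogonal y u" if "y \<in> orthogonal_comp (H j)" for y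
    proof -
      have "y \<in> S" using that j by (auto simp: S_def)
      then have "y \<in> span S" by (rule span_base)
      then have "u0 \<bullet> y = 0" using u0(2) by (simp add: orthogonal_def)
      then show ?thesis by (simp add: u_def orthogonal_def inner_commute)
    qed
    then have "u \<in> orthogonal_comp (orthogonal_comp (H j))" by (simp add: orthogonal_comp_def)
    then show ?thesis using orthogonal_comp_self[OF Hsub[OF j]] by simp
  qed
  define K where "K = cball 0 1 \<inter> {x. u \<bullet> x \<le> 1/2}"
  have cb: "convex_body K"
  proof -
    have "compact K" unfolding K_def by (rule compact_Int_closed[OF compact_cball closed_halfspace_le])
    moreover have "convex K" unfolding K_def by (rule convex_Int[OF convex_cball convex_halfspace_le])
    moreover have "ball 0 (1/2) \<subseteq> K"
    proof
      fix x :: "real^'n" assume "x \<in> ball 0 (1/2)"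
      then have x: "norm x < 1/2" by simp
      have "u \<bullet> x \<le> norm u * norm x" by (rule norm_cauchy_schwarz)
      then show "x \<in> K" using x nu by (simp add: K_def)
    qed
    then have "ball 0 (1/2) \<subseteq> interior K" by (rule interior_maximal) simp
    then have "interior K \<noteq> {}" by force
    ultimately show ?thesis by (simp add: convex_body_def)
  qed
  moreover have "\<forall>j\<in>{1..k}. rot_symmetric (H j) K"
  proof
    fix j assume j: "j \<in> {1..k}"
    show "rot_symmetric (H j) K"
    proof (rule RSI)
      fix x v v' assume x: "x \<in> H j" and v: "v \<in> orthogonal_comp (H j)" and v': "v' \<in> orthogonal_comp (H j)"
        and nv: "norm v = norm v'" and vx: "v + x \<in> K"
      have "norm (x + v) = norm (x + v')"
        by (rule pyth_eq[OF orth_comp_inner[OF v x] orth_comp_inner[OF v' x] nv])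
      then have n: "norm (v' + x) = norm (v + x)" by (simp add: add.commute)
      have "u \<bullet> v = 0" "u \<bullet> v' = 0" using orth_comp_inner[OF v uH[OF j]] orth_comp_inner[OF v' uH[OF j]] by auto
      then have "u \<bullet> (v' + x) = u \<bullet> (v + x)" by (simp add: inner_add_right)
      then show "v' + x \<in> K" using vx n by (simp add: K_def)
    qed
  qed
  moreover have "\<not> (\<exists>r>0. K = cball 0 r)"
  proof
    assume "\<exists>r>0. K = cball 0 r"
    then obtain r where r: "K = cball 0 r" by blast
    have "- u \<in> K" using nu uu by (simp add: K_def)
    then have "1 \<le> r" using r nu by simp
    then have "u \<in> K" using r nu by simp
    then show False using uu by (simp add: K_def)
  qed
  ultimately show ?thesis by blast
qed

lemma decomp:
  fixes S :: "(real^'n) set" and x :: "real^'n"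
  obtains a b where "a \<in> span S" "\<forall>w\<in>span S. b \<bullet> w = 0" "x = a + b"
proof -
  obtain y z where "y \<in> span S" "\<And>w. w \<in> span S \<Longrightarrow> orthogonal z w" "x = y + z"
    using orthogonal_subspace_decomp_exists[of S x] by metis
  then show ?thesis using that unfolding orthogonal_def by blast
qed

lemma caseB:
  fixes H :: "nat \<Rightarrow> (real^'n) set"
  assumes Hsub: "\<And>j. j \<in> {1..k} \<Longrightarrow> subspace (H j)"
    and eV: "\<And>j q. j \<in> {1..k} \<Longrightarrow> \<exists>e\<in>orthogonal_comp (H j). e \<noteq> 0 \<and> e \<bullet> q = 0"
    and IJ: "I \<union> J = {1..k}" "I \<inter> J = {}" "I \<noteq> {}" "J \<noteq> {}"
    and orth: "\<forall>i\<in>I. \<forall>j\<in>J. orthogonal_subspaces (orthogonal_comp (H i)) (orthogonal_comp (H j))"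
  shows "\<exists>K. convex_body K \<and> (\<forall>j\<in>{1..k}. rot_symmetric (H j) K) \<and> \<not> (\<exists>r>0. K = cball 0 r)"
proof -
  define V where "V = (\<lambda>j. orthogonal_comp (H j))"
  define A where "A = span (\<Union>i\<in>I. V i)"
  define B where "B = orthogonal_comp A"
  have sA: "subspace A" by (simp add: A_def)
  have sB: "subspace B" by (simp add: B_def subspace_orthogonal_comp)
  have VA: "V i \<subseteq> A" if "i \<in> I" for i
    using that span_superset[of "\<Union>i\<in>I. V i"] by (auto simp: A_def)
  have VB: "V j \<subseteq> B" if j: "j \<in> J" for j
  proof
    fix v assume v: "v \<in> V j"
    have "orthogonal v a" if "a \<in> A" for a
    proof (rule orthogonal_to_span)
      show "a \<in> span (\<Union>i\<in>I. V i)" using that by (simp add: A_def)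
      fix y assume "y \<in> (\<Union>i\<in>I. V i)"
      then obtain i where "i \<in> I" "y \<in> V i" by blast
      then have "orthogonal y v" using orth j v by (auto simp: orthogonal_subspaces_def V_def)
      then show "orthogonal v y" by (simp add: orthogonal_commute)
    qed
    then show "v \<in> B" by (auto simp: B_def orthogonal_comp_def orthogonal_commute)
  qed
  have AB: "a \<bullet> b = 0" if "a \<in> A" "b \<in> B" for a b
    using that by (simp add: B_def orthogonal_comp_def orthogonal_def)
  define S1 where "S1 = cball (0::real^'n) 1 \<inter> A"
  define S2 where "S2 = cball (0::real^'n) 2 \<inter> B"
  define K where "K = (\<Union>x\<in>S1. \<Union>y\<in>S2. {x + y})"
  have Kmem: "z \<in> K \<longleftrightarrow> (\<exists>a b. z = a + b \<and> a \<in> A \<and> norm a \<le> 1 \<and> b \<in> B \<and> norm b \<le> 2)" for z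
  proof
    assume "z \<in> K"
    then obtain a b where "a \<in> S1" "b \<in> S2" "z = a + b" by (auto simp: K_def)
    then show "\<exists>a b. z = a + b \<and> a \<in> A \<and> norm a \<le> 1 \<and> b \<in> B \<and> norm b \<le> 2"
      by (auto simp: S1_def S2_def)
  next
    assume "\<exists>a b. z = a + b \<and> a \<in> A \<and> norm a \<le> 1 \<and> b \<in> B \<and> norm b \<le> 2"
    then obtain a b where "z = a + b" "a \<in> S1" "b \<in> S2" by (auto simp: S1_def S2_def)
    then show "z \<in> K" by (auto simp: K_def)
  qed
  have cb: "convex_body K"
  proof -
    have c1: "compact S1" unfolding S1_def by (rule compact_Int_closed[OF compact_cball closed_subspace[OF sA]])
    have c2: "compact S2" unfolding S2_def by (rule compact_Int_closed[OF compact_cball closed_subspace[OF sB]])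
    have cK: "compact K" unfolding K_def by (rule compact_sums'[OF c1 c2])
    have cvS1: "convex S1" unfolding S1_def by (rule convex_Int[OF convex_cball subspace_imp_convex[OF sA]])
    have cvS2: "convex S2" unfolding S2_def by (rule convex_Int[OF convex_cball subspace_imp_convex[OF sB]])
    have cvK: "convex K" unfolding K_def by (rule convex_sums[OF cvS1 cvS2])
    have bK: "ball 0 1 \<subseteq> K"
    proof
      fix x :: "real^'n" assume "x \<in> ball 0 1"
      then have x: "norm x < 1" by simp
      obtain a b where a: "a \<in> span (\<Union>i\<in>I. V i)" and b: "\<forall>w\<in>span (\<Union>i\<in>I. V i). b \<bullet> w = 0"
        and xab: "x = a + b"
        by (rule decomp)
      have aA: "a \<in> A" using a by (simp add: A_def)
      have "orthogonal y b" if "y \<in> A" for y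
      proof -
        have "b \<bullet> y = 0" using b that by (simp add: A_def)
        then show ?thesis by (simp add: orthogonal_def inner_commute)
      qed
      then have bB: "b \<in> B" by (simp add: B_def orthogonal_comp_def)
      have "orthogonal a b" using AB[OF aA bB] by (simp add: orthogonal_def)
      then have "(norm x)^2 = (norm a)^2 + (norm b)^2"
        unfolding xab by (rule norm_add_Pythagorean)
      then have "(norm a)^2 \<le> (norm x)^2" "(norm b)^2 \<le> (norm x)^2" using xab by simp_all
      then have "norm a \<le> norm x" "norm b \<le> norm x" using power2_le_imp_le[OF _ norm_ge_zero] by blast+
      then have na: "norm a \<le> 1" "norm b \<le> 2" using x by linarith+
      show "x \<in> K" unfolding Kmem using aA bB xab na by blast
    qed
    have "ball 0 1 \<subseteq> interior K" using bK by (rule interior_maximal) simp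
    moreover have "(0::real^'n) \<in> ball 0 1" by simp
    ultimately have iK: "interior K \<noteq> {}" by blast
    show ?thesis using cK cvK iK by (simp add: convex_body_def)
  qed
  moreover have "\<forall>j\<in>{1..k}. rot_symmetric (H j) K"
  proof
    fix j assume j: "j \<in> {1..k}"
    show "rot_symmetric (H j) K"
    proof (rule RSI)
      fix x v v' assume x: "x \<in> H j" and v: "v \<in> orthogonal_comp (H j)" and v': "v' \<in> orthogonal_comp (H j)"
        and nv: "norm v = norm v'" and vx: "v + x \<in> K"
      obtain a b where ab: "v + x = a + b" "a \<in> A" "norm a \<le> 1" "b \<in> B" "norm b \<le> 2" using vx Kmem by blast
      have xv: "x \<bullet> v = 0" "x \<bullet> v' = 0" using orth_comp_inner[OF v x] orth_comp_inner[OF v' x] by auto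
      show "v' + x \<in> K"
      proof (cases "j \<in> I")
        case True
        have vA: "v \<in> A" "v' \<in> A" using VA[OF True] v v' by (auto simp: V_def)
        have bv: "b \<bullet> v = 0" "b \<bullet> v' = 0" using AB[OF vA(1) ab(4)] AB[OF vA(2) ab(4)] by (auto simp: inner_commute)
        define d where "d = a - v"
        have d: "d = x - b" using ab(1) by (simp add: d_def algebra_simps)
        have "d \<bullet> v = 0" "d \<bullet> v' = 0" using xv bv by (simp_all add: d inner_diff_left)
        then have "norm (d + v) = norm (d + v')" using nv by (rule pyth_eq)
        then have na: "norm (d + v') = norm a" by (simp add: d_def)
        have "d + v' \<in> A" using sA ab(2) vA by (simp add: d_def subspace_add subspace_diff)
        moreover have "v' + x = (d + v') + b" using ab(1) by (simp add: d_def algebra_simps)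
        ultimately have "v' + x = (d + v') + b \<and> d + v' \<in> A \<and> norm (d + v') \<le> 1 \<and> b \<in> B \<and> norm b \<le> 2"
          using na ab(3,4,5) by simp
        then show ?thesis unfolding Kmem by blast
      next
        case False
        then have jJ: "j \<in> J" using IJ(1) j by blast
        have vB: "v \<in> B" "v' \<in> B" using VB[OF jJ] v v' by (auto simp: V_def)
        have av: "a \<bullet> v = 0" "a \<bullet> v' = 0" using AB[OF ab(2) vB(1)] AB[OF ab(2) vB(2)] by auto
        define d where "d = b - v"
        have d: "d = x - a" using ab(1) by (simp add: d_def algebra_simps)
        have "d \<bullet> v = 0" "d \<bullet> v' = 0" using xv av by (simp_all add: d inner_diff_left)
        then have "norm (d + v) = norm (d + v')" using nv by (rule pyth_eq)
        then have nb: "norm (d + v') = norm b" by (simp add: d_def)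
        have "d + v' \<in> B" using sB ab(4) vB by (simp add: d_def subspace_add subspace_diff)
        moreover have "v' + x = a + (d + v')" using ab(1) by (simp add: d_def algebra_simps)
        ultimately have "v' + x = a + (d + v') \<and> a \<in> A \<and> norm a \<le> 1 \<and> d + v' \<in> B \<and> norm (d + v') \<le> 2"
          using nb ab(2,3,5) by simp
        then show ?thesis unfolding Kmem by blast
      qed
    qed
  qed
  moreover have "\<not> (\<exists>r>0. K = cball 0 r)"
  proof
    assume "\<exists>r>0. K = cball 0 r"
    then obtain r where r: "K = cball 0 r" by blast
    obtain i where i: "i \<in> I" using IJ(3) by blast
    obtain j where jJ: "j \<in> J" using IJ(4) by blast
    have ik: "i \<in> {1..k}" "j \<in> {1..k}" using i jJ IJ(1) by auto
    obtain ei where ei: "ei \<in> V i" "ei \<noteq> 0" using eV[OF ik(1), of 0] by (auto simp: V_def)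
    obtain ej where ej: "ej \<in> V j" "ej \<noteq> 0" using eV[OF ik(2), of 0] by (auto simp: V_def)
    define ui where "ui = (2 / norm ei) *\<^sub>R ei"
    define uj where "uj = (2 / norm ej) *\<^sub>R ej"
    have nui: "norm ui = 2" using ei(2) by (simp add: ui_def)
    have nuj: "norm uj = 2" using ej(2) by (simp add: uj_def)
    have uiA: "ui \<in> A" using VA[OF i] ei(1) sA by (auto simp: ui_def subspace_scale)
    have ujB: "uj \<in> B" using VB[OF jJ] ej(1) sB by (auto simp: uj_def subspace_scale)
    have "uj = 0 + uj" by simp
    moreover have "(0::real^'n) \<in> A" using sA by (rule subspace_0)
    ultimately have "uj \<in> K" unfolding Kmem using ujB nuj by fastforce
    then have "2 \<le> r" using r nuj by simp
    then have "ui \<in> K" using r nui by simp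
    then obtain a b where ab: "ui = a + b" "a \<in> A" "norm a \<le> 1" "b \<in> B" using Kmem by blast
    have "b = ui - a" using ab(1) by simp
    then have "b \<in> A" using sA uiA ab(2) by (simp add: subspace_diff)
    then have "b = 0" using orthogonal_Int_0[OF sA] ab(4) by (auto simp: B_def)
    then have "a = ui" using ab(1) by simp
    then show False using ab(3) nui by simp
  qed
  ultimately show ?thesis by blast
qed

theorem theorem4p1:
  fixes H :: "nat \<Rightarrow> (real^'n) set" and k :: nat
  assumes sub: "\<And>j. j \<in> {1..k} \<Longrightarrow> subspace (H j)"
    and dims: "\<And>j. j \<in> {1..k} \<Longrightarrow> 1 \<le> dim (H j) \<and> dim (H j) \<le> CARD('n) - 2"
  defines "P1 \<equiv> span (\<Union>j\<in>{1..k}. orthogonal_comp (H j)) = UNIV \<and>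
              \<not> (\<exists>I J. I \<union> J = {1..k} \<and> I \<inter> J = {} \<and> I \<noteq> {} \<and> J \<noteq> {} \<and>
                    (\<forall>i\<in>I. \<forall>j\<in>J. orthogonal_subspaces (orthogonal_comp (H i)) (orthogonal_comp (H j))))"
    and "P2 \<equiv> \<forall>E. E \<subseteq> sphere 0 1 \<and> E \<noteq> {} \<and> closed E \<and>
              (\<forall>j\<in>{1..k}. \<forall>x\<in>E. sphere 0 1 \<inter> ((\<lambda>y. y + x) ` orthogonal_comp (H j)) \<subseteq> E)
              \<longrightarrow> E = sphere 0 1"
    and "P3 \<equiv> \<forall>F. closed F \<and> (\<forall>j\<in>{1..k}. \<forall>f. rotation_fixing (H j) f \<longrightarrow> f ` F = F)
              \<longrightarrow> (\<exists>R::real set. F = (\<Union>r\<in>R. sphere 0 r))"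
    and "P4 \<equiv> \<forall>K. convex_body K \<and> (\<forall>j\<in>{1..k}. rot_symmetric (H j) K)
              \<longrightarrow> (\<exists>r>0. K = cball 0 r)"
  shows "(P1 \<longleftrightarrow> P2) \<and> (P2 \<longleftrightarrow> P3) \<and> (P3 \<longleftrightarrow> P4)"
proof -
  note d1 = assms(3) and d2 = assms(4) and d3 = assms(5) and d4 = assms(6)
  have eV: "\<exists>e\<in>orthogonal_comp (H j). e \<noteq> 0 \<and> e \<bullet> q = 0" if j: "j \<in> {1..k}" for j q
    using dims[OF j] by (intro eV_lemma[OF sub[OF j]]) auto
  have Vsub: "subspace (orthogonal_comp (H j))" for j by (rule subspace_orthogonal_comp)
  have i12: "P2" if p1: "P1"
  proof -
    have P1': "span (\<Union>j\<in>{1..k}. orthogonal_comp (H j)) = UNIV \<and>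
              \<not> (\<exists>I J. I \<union> J = {1..k} \<and> I \<inter> J = {} \<and> I \<noteq> {} \<and> J \<noteq> {} \<and>
                    (\<forall>i\<in>I. \<forall>j\<in>J. orthogonal_subspaces (orthogonal_comp (H i)) (orthogonal_comp (H j))))"
      using p1 unfolding d1 .
    show ?thesis unfolding d2
    proof (intro allI impI)
      fix E :: "(real^'n) set"
      assume E: "E \<subseteq> sphere 0 1 \<and> E \<noteq> {} \<and> closed E \<and>
              (\<forall>j\<in>{1..k}. \<forall>x\<in>E. sphere 0 1 \<inter> ((\<lambda>y. y + x) ` orthogonal_comp (H j)) \<subseteq> E)"
      show "E = sphere 0 1"
      proof (rule p1p2[where V = "\<lambda>j. orthogonal_comp (H j)"])
        show "subspace (orthogonal_comp (H j))" for j by (rule Vsub)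
        show "\<exists>e\<in>orthogonal_comp (H j). e \<noteq> 0 \<and> e \<bullet> q = 0" if "j \<in> {1..k}" for j q
          using eV[OF that] .
        show "span (\<Union>j\<in>{1..k}. orthogonal_comp (H j)) = UNIV \<and>
              \<not> (\<exists>I J. I \<union> J = {1..k} \<and> I \<inter> J = {} \<and> I \<noteq> {} \<and> J \<noteq> {} \<and>
                    (\<forall>i\<in>I. \<forall>j\<in>J. orthogonal_subspaces (orthogonal_comp (H i)) (orthogonal_comp (H j))))"
          by (rule P1')
        show "E \<subseteq> sphere 0 1" "E \<noteq> {}" using E by auto
        show "\<forall>j\<in>{1..k}. \<forall>x\<in>E. sphere 0 1 \<inter> ((\<lambda>y. y + x) ` orthogonal_comp (H j)) \<subseteq> E"
          using E by blast
      qed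
    qed
  qed
  have i23: "P3" if p2: "P2"
  proof -
    have P2': "\<forall>E. E \<subseteq> sphere 0 1 \<and> E \<noteq> {} \<and> closed E \<and>
              (\<forall>j\<in>{1..k}. \<forall>x\<in>E. sphere 0 1 \<inter> ((\<lambda>y. y + x) ` orthogonal_comp (H j)) \<subseteq> E)
              \<longrightarrow> E = sphere 0 1" using p2 unfolding d2 .
    show ?thesis unfolding d3
    proof (intro allI impI)
      fix F :: "(real^'n) set"
      assume F: "closed F \<and> (\<forall>j\<in>{1..k}. \<forall>f. rotation_fixing (H j) f \<longrightarrow> f ` F = F)"
      show "\<exists>R::real set. F = (\<Union>r\<in>R. sphere 0 r)"
      proof (rule p2p3[where H = H])
        show "\<exists>e\<in>orthogonal_comp (H j). e \<noteq> 0 \<and> e \<bullet> q = 0" if "j \<in> {1..k}" for j q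
          using eV[OF that] .
        show "closed F" using F by blast
        show "\<forall>j\<in>{1..k}. \<forall>f. rotation_fixing (H j) f \<longrightarrow> f ` F = F" using F by blast
      qed (rule P2')
    qed
  qed
  have i34: "P4" if p3: "P3"
  proof -
    have P3': "\<forall>F. closed F \<and> (\<forall>j\<in>{1..k}. \<forall>f. rotation_fixing (H j) f \<longrightarrow> f ` F = F)
              \<longrightarrow> (\<exists>R::real set. F = (\<Union>r\<in>R. sphere 0 r))" using p3 unfolding d3 .
    show ?thesis unfolding d4
    proof (intro allI impI)
      fix K :: "(real^'n) set"
      assume K: "convex_body K \<and> (\<forall>j\<in>{1..k}. rot_symmetric (H j) K)"
      show "\<exists>r>0. K = cball 0 r"
      proof (rule p3p4[where H = H])
        show "subspace (H j)" if "j \<in> {1..k}" for j using sub[OF that] .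
        show "convex_body K" using K by blast
        show "\<forall>j\<in>{1..k}. rot_symmetric (H j) K" using K by blast
      qed (rule P3')
    qed
  qed
  have i41: "P1" if p4: "P4"
  proof -
    have P4': "\<forall>K. convex_body K \<and> (\<forall>j\<in>{1..k}. rot_symmetric (H j) K)
              \<longrightarrow> (\<exists>r>0. K = cball 0 r)" using p4 unfolding d4 .
    have bad: False if K: "convex_body K \<and> (\<forall>j\<in>{1..k}. rot_symmetric (H j) K) \<and> \<not> (\<exists>r>0. K = cball 0 r)" for K
    proof -
      have "convex_body K \<and> (\<forall>j\<in>{1..k}. rot_symmetric (H j) K)" using K by blast
      with spec[OF P4', of K] have "\<exists>r>0. K = cball 0 r" by (rule mp)
      then show False using K by blast
    qed
    show ?thesis unfolding d1
    proof (rule ccontr)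
      assume np: "\<not> (span (\<Union>j\<in>{1..k}. orthogonal_comp (H j)) = UNIV \<and>
              \<not> (\<exists>I J. I \<union> J = {1..k} \<and> I \<inter> J = {} \<and> I \<noteq> {} \<and> J \<noteq> {} \<and>
                    (\<forall>i\<in>I. \<forall>j\<in>J. orthogonal_subspaces (orthogonal_comp (H i)) (orthogonal_comp (H j)))))"
      show False
      proof (cases "span (\<Union>j\<in>{1..k}. orthogonal_comp (H j)) = UNIV")
        case False
        obtain K where "convex_body K \<and> (\<forall>j\<in>{1..k}. rot_symmetric (H j) K) \<and> \<not> (\<exists>r>0. K = cball 0 r)"
          using caseA[where H = H, OF sub False] by blast
        then show False by (rule bad)
      next
        case True
        with np obtain I J where IJ: "I \<union> J = {1..k}" "I \<inter> J = {}" "I \<noteq> {}" "J \<noteq> {}"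
          "\<forall>i\<in>I. \<forall>j\<in>J. orthogonal_subspaces (orthogonal_comp (H i)) (orthogonal_comp (H j))" by blast
        obtain K where "convex_body K \<and> (\<forall>j\<in>{1..k}. rot_symmetric (H j) K) \<and> \<not> (\<exists>r>0. K = cball 0 r)"
          using caseB[where H = H, OF sub eV IJ] by blast
        then show False by (rule bad)
      qed
    qed
  qed
  show ?thesis using i12 i23 i34 i41 by blast
qed

end
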